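(* Let $L\ge2$, let $\mathcal{L}$ and $\mathcal{U}$ be label sets of size $L$, and fix a distinguished $z\in\mathcal{L}$. Let $H$ be a Pauli Hamiltonian whose terms are operators $P_{u,\ell}$ ($u\in\mathcal{U},\ell\in\mathcal{L}$) and $Q_\ell$ ($\ell\in\mathcal{L}\setminus\{z\}$) such that all $P_{u,\ell}$ mutually commute and $Q_\ell$ commutes with $P_{u,\ell'}$ if and only if $\ell'=\ell$. Let $\mathcal{G}$ be the grouping with groups $\{P_{u,\ell}:u\in\mathcal{U}\}\cup\{Q_\ell\}$ for $\ell\neq z$ and $\{P_{u,z}:u\in\mathcal{U}\}$, and let $\mathcal{G}'$ be the grouping with groups $\{P_{u,\ell}:u\in\mathcal{U},\ell\in\mathcal{L}\}$ and $\{Q_\ell\}$ for $\ell\ne z$. Then there exists an overlapped grouping $\mathcal{R}$ with $L$ groups which is a repacking of $\mathcal{G}$ and also (after a suitable reindexing of the groups of $\mathcal{G}'$) a repacking of $\mathcal{G}'$.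
   Context: A grouping of a Pauli Hamiltonian is a list of pairwise disjoint sets of mutually commuting Pauli terms covering all terms; an overlapped grouping drops disjointness. A repacking of a grouping $(G^{[1]},\dots,G^{[m]})$ is an overlapped grouping $(G'^{[1]},\dots,G'^{[m]})$ with the same number of groups and $G^{[j]}\subseteq G'^{[j]}$ for every $j$. *)

theory Defs
  imports Main
begin

text \<open>Single-qubit Pauli operators (phases are irrelevant for commutation).\<close>
datatype pauli = PI | PX | PY | PZ

definition pauli_anticomm :: "pauli \<Rightarrow> pauli \<Rightarrow> bool" where
  "pauli_anticomm a b \<longleftrightarrow> a \<noteq> PI \<and> b \<noteq> PI \<and> a \<noteq> b"

type_synonym pstring = "pauli list"

definition commute :: "pstring \<Rightarrow> pstring \<Rightarrow> bool" where
  "commute p q \<longleftrightarrow> even (card {i. i < length p \<and> pauli_anticomm (p ! i) (q ! i)})"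

definition overlapped_grouping :: "pstring set \<Rightarrow> 'i set \<Rightarrow> ('i \<Rightarrow> pstring set) \<Rightarrow> bool" where
  "overlapped_grouping H I G \<longleftrightarrow>
     (\<forall>j\<in>I. G j \<subseteq> H \<and> (\<forall>p\<in>G j. \<forall>q\<in>G j. commute p q)) \<and> (\<Union>j\<in>I. G j) = H"

definition grouping :: "pstring set \<Rightarrow> 'i set \<Rightarrow> ('i \<Rightarrow> pstring set) \<Rightarrow> bool" where
  "grouping H I G \<longleftrightarrow> overlapped_grouping H I G \<and>
     (\<forall>j\<in>I. \<forall>k\<in>I. j \<noteq> k \<longrightarrow> G j \<inter> G k = {})"

text \<open>R is a repacking of the grouping G (same index set, hence same number of groups).\<close>
definition repacking :: "pstring set \<Rightarrow> 'i set \<Rightarrow> ('i \<Rightarrow> pstring set) \<Rightarrow> ('i \<Rightarrow> pstring set) \<Rightarrow> bool" where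
  "repacking H I G R \<longleftrightarrow> grouping H I G \<and> overlapped_grouping H I R \<and> (\<forall>j\<in>I. G j \<subseteq> R j)"

end

theory Submission
  imports Defs
begin

lemma commute_refl: "commute p p"
  by (simp add: commute_def pauli_anticomm_def)

lemma commute_sym: "length p = length q \<Longrightarrow> commute p q \<Longrightarrow> commute q p"
proof -
  assume a: "length p = length q" "commute p q"
  have "{i. i < length q \<and> pauli_anticomm (q ! i) (p ! i)} = {i. i < length p \<and> pauli_anticomm (p ! i) (q ! i)}"
    using a(1) unfolding pauli_anticomm_def by auto
  then show ?thesis using a(2) unfolding commute_def by simp
qed

theorem lemma3:
  fixes L n :: nat
    and LL :: "'l set" and UU :: "'u set" and z :: 'l
    and P :: "'u \<Rightarrow> 'l \<Rightarrow> pstring" and Q :: "'l \<Rightarrow> pstring"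
    and H :: "pstring set" and G G' :: "'l \<Rightarrow> pstring set"
  assumes "L \<ge> 2"
    and "finite LL" and "card LL = L" and "finite UU" and "card UU = L"
    and "z \<in> LL"
    and len_P: "\<forall>u\<in>UU. \<forall>l\<in>LL. length (P u l) = n"
    and len_Q: "\<forall>l\<in>LL - {z}. length (Q l) = n"
    and inj_P: "inj_on (\<lambda>(u, l). P u l) (UU \<times> LL)"
    and inj_Q: "inj_on Q (LL - {z})"
    and PP: "\<forall>u\<in>UU. \<forall>l\<in>LL. \<forall>u'\<in>UU. \<forall>l'\<in>LL. commute (P u l) (P u' l')"
    and QP: "\<forall>l\<in>LL - {z}. \<forall>u\<in>UU. \<forall>l'\<in>LL. commute (Q l) (P u l') \<longleftrightarrow> l' = l"
    and H_def: "H = {P u l | u l. u \<in> UU \<and> l \<in> LL} \<union> Q ` (LL - {z})"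
    and G_def: "\<forall>l\<in>LL. G l = (if l = z then {P u z | u. u \<in> UU}
                                   else {P u l | u. u \<in> UU} \<union> {Q l})"
    and G'_def: "\<forall>l\<in>LL. G' l = (if l = z then {P u l' | u l'. u \<in> UU \<and> l' \<in> LL}
                                     else {Q l})"
  shows "\<exists>R. repacking H LL G R \<and>
             (\<exists>\<sigma>. bij_betw \<sigma> LL LL \<and> repacking H LL (G' \<circ> \<sigma>) R)"
proof -
  have UUne: "UU \<noteq> {}" using assms(1,4,5) by auto
  have QnP: "Q l \<noteq> P u l'" if "l \<in> LL - {z}" "u \<in> UU" "l' \<in> LL" for l u l'
  proof
    assume eq: "Q l = P u l'"
    have "\<exists>l''\<in>LL. l'' \<noteq> l"
    proof (rule ccontr)
      assume "\<not> ?thesis"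
      then have "LL \<subseteq> {l}" by auto
      then have "card LL \<le> card {l}" by (rule card_mono[rotated]) simp
      then have "card LL \<le> 1" by simp
      then show False using assms(1,3) by simp
    qed
    then obtain l'' where l'': "l'' \<in> LL" "l'' \<noteq> l" by blast
    have "commute (Q l) (P u l'')" using eq PP that l'' by metis
    then show False using QP that l'' by blast
  qed
  have Pinj: "P u l = P u' l' \<longleftrightarrow> u = u' \<and> l = l'" if "u \<in> UU" "l \<in> LL" "u' \<in> UU" "l' \<in> LL" for u l u' l'
    using inj_P that unfolding inj_on_def by auto
  have commPQ: "commute (P u l) (Q l)" if "l \<in> LL - {z}" "u \<in> UU" for u l
    using commute_sym[of "Q l" "P u l"] QP len_P len_Q that by auto
  define PS where "PS = {P u l' | u l'. u \<in> UU \<and> l' \<in> LL}"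
  have PSH: "PS \<subseteq> H" unfolding PS_def H_def by blast
  have PScomm: "\<forall>p\<in>PS. \<forall>q\<in>PS. commute p q" unfolding PS_def using PP by blast
  have Gj_cases: "x \<in> G j \<Longrightarrow> j \<in> LL \<Longrightarrow> (\<exists>u\<in>UU. x = P u j) \<or> (j \<noteq> z \<and> x = Q j)" for x j
  proof -
    assume "x \<in> G j" "j \<in> LL"
    then have "x \<in> (if j = z then {P u z | u. u \<in> UU} else {P u j | u. u \<in> UU} \<union> {Q j})"
      using G_def by blast
    then show ?thesis by (cases "j = z") auto
  qed
  have GjI: "j \<in> LL \<Longrightarrow> u \<in> UU \<Longrightarrow> P u j \<in> G j" for j u
    using G_def by (cases "j = z") auto
  have GjQ: "j \<in> LL - {z} \<Longrightarrow> Q j \<in> G j" for j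
    using G_def by auto
  have Gsub: "G j \<subseteq> H" if j: "j \<in> LL" for j
  proof
    fix x assume "x \<in> G j"
    from Gj_cases[OF this j] show "x \<in> H" unfolding H_def using j by blast
  qed
  have Gcomm: "\<forall>p\<in>G j. \<forall>q\<in>G j. commute p q" if j: "j \<in> LL" for j
  proof (intro ballI)
    fix p q assume p: "p \<in> G j" and q: "q \<in> G j"
    from Gj_cases[OF p j] Gj_cases[OF q j] show "commute p q"
    proof (elim disjE conjE bexE)
      fix u u' assume "p = P u j" "q = P u' j" "u \<in> UU" "u' \<in> UU"
      then show ?thesis using PP j by blast
    next
      fix u assume "u \<in> UU" "p = P u j" "j \<noteq> z" "q = Q j"
      then show ?thesis using commPQ j by blast
    next
      fix u assume "u \<in> UU" "q = P u j" "j \<noteq> z" "p = Q j"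
      then show ?thesis using QP j by blast
    next
      assume "p = Q j" "q = Q j" then show ?thesis by (simp add: commute_refl)
    qed
  qed
  have Gcov: "(\<Union>j\<in>LL. G j) = H"
  proof
    show "(\<Union>j\<in>LL. G j) \<subseteq> H" using Gsub by blast
    show "H \<subseteq> (\<Union>j\<in>LL. G j)"
    proof
      fix x assume "x \<in> H"
      then consider u l where "u \<in> UU" "l \<in> LL" "x = P u l" | l where "l \<in> LL - {z}" "x = Q l"
        unfolding H_def by blast
      then show "x \<in> (\<Union>j\<in>LL. G j)"
      proof cases
        case 1 then show ?thesis using GjI by blast
      next
        case 2 then show ?thesis using GjQ by blast
      qed
    qed
  qed
  have Gdisj: "G j \<inter> G k = {}" if jk: "j \<in> LL" "k \<in> LL" "j \<noteq> k" for j k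
  proof (rule ccontr)
    assume "G j \<inter> G k \<noteq> {}"
    then obtain x where x: "x \<in> G j" "x \<in> G k" by blast
    from Gj_cases[OF x(1) jk(1)] Gj_cases[OF x(2) jk(2)] show False
    proof (elim disjE conjE bexE)
      fix u u' assume "x = P u j" "x = P u' k" "u \<in> UU" "u' \<in> UU"
      then show False using Pinj jk by metis
    next
      fix u assume "u \<in> UU" "x = P u j" "k \<noteq> z" "x = Q k"
      then show False using QnP jk by (metis DiffI singletonD)
    next
      fix u assume "u \<in> UU" "x = P u k" "j \<noteq> z" "x = Q j"
      then show False using QnP jk by (metis DiffI singletonD)
    next
      assume "j \<noteq> z" "x = Q j" "k \<noteq> z" "x = Q k"
      then show False using inj_Q jk unfolding inj_on_def by blast
    qed
  qed
  have gG: "grouping H LL G"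
    unfolding grouping_def overlapped_grouping_def using Gsub Gcomm Gcov Gdisj by blast
  have G'z: "G' z = PS" using G'_def assms(6) unfolding PS_def by simp
  have G'o: "j \<in> LL - {z} \<Longrightarrow> G' j = {Q j}" for j using G'_def by simp
  have G'sub: "G' j \<subseteq> H" if j: "j \<in> LL" for j
    using j G'z G'o PSH unfolding H_def by (cases "j = z") auto
  have G'comm: "\<forall>p\<in>G' j. \<forall>q\<in>G' j. commute p q" if j: "j \<in> LL" for j
    using j G'z G'o PScomm by (cases "j = z") (auto simp: commute_refl)
  have G'cov: "(\<Union>j\<in>LL. G' j) = H"
  proof
    show "(\<Union>j\<in>LL. G' j) \<subseteq> H" using G'sub by blast
    show "H \<subseteq> (\<Union>j\<in>LL. G' j)"
    proof
      fix x assume "x \<in> H"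
      then have "x \<in> PS \<or> (\<exists>l\<in>LL - {z}. x = Q l)" unfolding H_def PS_def by blast
      then show "x \<in> (\<Union>j\<in>LL. G' j)"
      proof
        assume "x \<in> PS" then show ?thesis using G'z assms(6) by blast
      next
        assume "\<exists>l\<in>LL - {z}. x = Q l"
        then obtain l where "l \<in> LL - {z}" "x = Q l" by blast
        then show ?thesis using G'o[of l] by blast
      qed
    qed
  qed
  have G'disj: "G' j \<inter> G' k = {}" if jk: "j \<in> LL" "k \<in> LL" "j \<noteq> k" for j k
  proof -
    have QPS: "l \<in> LL - {z} \<Longrightarrow> Q l \<notin> PS" for l unfolding PS_def using QnP by blast
    show ?thesis
    proof (cases "j = z")
      case True then show ?thesis using G'z G'o[of k] QPS[of k] jk by auto
    next
      case False
      show ?thesis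
      proof (cases "k = z")
        case True then show ?thesis using G'z G'o[of j] QPS[of j] jk False by auto
      next
        case False2: False
        have "Q j \<noteq> Q k" using inj_Q jk False False2 unfolding inj_on_def by blast
        then show ?thesis using G'o[of j] G'o[of k] jk False False2 by auto
      qed
    qed
  qed
  have gG': "grouping H LL G'"
    unfolding grouping_def overlapped_grouping_def using G'sub G'comm G'cov G'disj by blast
  define R where "R = (\<lambda>l. if l = z then PS else G l)"
  have Rsub: "R j \<subseteq> H" if "j \<in> LL" for j using that PSH Gsub unfolding R_def by simp
  have Rcomm: "\<forall>p\<in>R j. \<forall>q\<in>R j. commute p q" if "j \<in> LL" for j
    using that PScomm Gcomm unfolding R_def by simp
  have GR: "G j \<subseteq> R j" if "j \<in> LL" for j
  proof (cases "j = z")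
    case True
    then show ?thesis unfolding R_def PS_def using G_def that by auto
  next
    case False then show ?thesis unfolding R_def by simp
  qed
  have G'R: "G' j \<subseteq> R j" if "j \<in> LL" for j
    using that G'z G'o GjQ unfolding R_def by (cases "j = z") auto
  have Rcov: "(\<Union>j\<in>LL. R j) = H"
  proof
    show "(\<Union>j\<in>LL. R j) \<subseteq> H" using Rsub by blast
    show "H \<subseteq> (\<Union>j\<in>LL. R j)" using Gcov GR by blast
  qed
  have oR: "overlapped_grouping H LL R"
    unfolding overlapped_grouping_def using Rsub Rcomm Rcov by blast
  have "repacking H LL G R"
    unfolding repacking_def using gG oR GR by blast
  moreover have "repacking H LL (G' \<circ> id) R"
    unfolding repacking_def using gG' oR G'R by simp
  moreover have "bij_betw id LL LL" by simp
  ultimately show ?thesis by blast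
qed

end
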